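(* Let $c_0,p_0$ be constants and let $(H_n)_{n\in\mathbb Z}$, $(G_n)_{n\in\mathbb Z}$ be sequences of differentiable functions of a real variable $\eta$ on a common interval, with $H_n>0$, satisfying for all $n$ \[ -c_0\,H_n+\frac{dH_n}{d\eta}=H_n\bigl(G_{n+1}-G_n\bigr),\qquad p_0-c_0\,G_n+\frac{dG_n}{d\eta}=2\bigl(H_n^2-H_{n-1}^2\bigr). \] Define $r_n(\eta)=2\log\bigl(2H_n(\eta)\bigr)$. Then for all $n$ \[ \frac{d^2 r_n}{d\eta^2}=c_0\Bigl(\frac{dr_n}{d\eta}-2c_0\Bigr)+\bigl(e^{r_{n+1}}-2e^{r_n}+e^{r_{n-1}}\bigr). \]
   Context: In the paper this is stated in the notation $H=H(\eta)$, $\overline H=H(\overline\eta)$, $\underline H=H(\underline\eta)$ along a chain of points $\eta=\nu(n)+\sigma(t)$, $\overline\eta=\nu(n+1)+\sigma(t)$; here $H_n$, $G_n$ denote $H$, $G$ evaluated at the $n$-th point of the chain, viewed as functions of the common shift parameter, and overline/underline correspond to $n\pm1$. *)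

theory Defs
  imports "HOL-Analysis.Analysis"
begin

definition rfun :: "(int \<Rightarrow> real \<Rightarrow> real) \<Rightarrow> int \<Rightarrow> real \<Rightarrow> real" where
  "rfun H n \<eta> = 2 * ln (2 * H n \<eta>)"

end

theory Submission
  imports Defs
begin

theorem mainTheorem2:
  fixes c0 p0 :: real
    and H G :: "int \<Rightarrow> real \<Rightarrow> real"
    and I :: "real set"
  assumes I_open: "open I" and I_int: "is_interval I"
    and H_diff: "\<And>n x. x \<in> I \<Longrightarrow> H n differentiable (at x)"
    and G_diff: "\<And>n x. x \<in> I \<Longrightarrow> G n differentiable (at x)"
    and H_pos: "\<And>n x. x \<in> I \<Longrightarrow> H n x > 0"
    and eqH: "\<And>n x. x \<in> I \<Longrightarrow>
       - c0 * H n x + deriv (H n) x = H n x * (G (n + 1) x - G n x)"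
    and eqG: "\<And>n x. x \<in> I \<Longrightarrow>
       p0 - c0 * G n x + deriv (G n) x = 2 * ((H n x)\<^sup>2 - (H (n - 1) x)\<^sup>2)"
  shows "\<forall>n. \<forall>x\<in>I.
     (rfun H n has_real_derivative deriv (rfun H n) x) (at x) \<and>
     (deriv (rfun H n) has_real_derivative
        (c0 * (deriv (rfun H n) x - 2 * c0)
         + (exp (rfun H (n + 1) x) - 2 * exp (rfun H n x) + exp (rfun H (n - 1) x)))) (at x)"
proof (intro allI ballI conjI)
  fix n x assume x: "x \<in> I"
  have dH: "(H m has_real_derivative deriv (H m) y) (at y)" if "y \<in> I" for m y
    using H_diff[OF that] DERIV_deriv_iff_real_differentiable by blast
  have dG: "(G m has_real_derivative deriv (G m) y) (at y)" if "y \<in> I" for m y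
    using G_diff[OF that] DERIV_deriv_iff_real_differentiable by blast
  have dr: "(rfun H m has_real_derivative 2 * deriv (H m) y / H m y) (at y)" if y: "y \<in> I" for m y
  proof -
    have "((\<lambda>t. 2 * ln (2 * H m t)) has_real_derivative 2 * ((2 * deriv (H m) y) / (2 * H m y))) (at y)"
    proof -
      have "((\<lambda>t. 2 * H m t) has_real_derivative 2 * deriv (H m) y) (at y)"
        using DERIV_cmult[OF dH[OF y, of m], of 2] by simp
      from DERIV_chain2[OF DERIV_ln this] H_pos[OF y, of m]
      have a: "((\<lambda>t. ln (2 * H m t)) has_real_derivative inverse (H m y) * deriv (H m) y) (at y)" by simp
      have e: "inverse (H m y) * deriv (H m) y = (2 * deriv (H m) y) / (2 * H m y)"
        using H_pos[OF y, of m] by (simp add: field_simps)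
      from a have "((\<lambda>t. ln (2 * H m t)) has_real_derivative (2 * deriv (H m) y) / (2 * H m y)) (at y)"
        unfolding e .
      from DERIV_cmult[OF this, of 2] show ?thesis by simp
    qed
    then show ?thesis using H_pos[OF y] unfolding rfun_def[abs_def] by simp
  qed
  have dreq: "deriv (rfun H m) y = 2 * c0 + 2 * (G (m + 1) y - G m y)" if y: "y \<in> I" for m y
  proof -
    have "deriv (rfun H m) y = 2 * deriv (H m) y / H m y" using DERIV_imp_deriv[OF dr[OF y]] .
    also have "deriv (H m) y = H m y * (G (m + 1) y - G m y) + c0 * H m y"
      using eqH[OF y, of m] by linarith
    finally have "deriv (rfun H m) y = 2 * (H m y * ((G (m + 1) y - G m y) + c0)) / H m y"
      by (simp add: algebra_simps)
    moreover have "2 * (H m y * ((G (m + 1) y - G m y) + c0)) / H m y = 2 * ((G (m + 1) y - G m y) + c0)"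
      using H_pos[OF y, of m] by simp
    ultimately show ?thesis by simp
  qed
  have ex: "exp (rfun H m y) = 4 * (H m y)\<^sup>2" if y: "y \<in> I" for m y
  proof -
    have "rfun H m y = ln ((2 * H m y) ^ 2)" unfolding rfun_def
      using H_pos[OF y, of m] ln_realpow[of "2 * H m y" 2] by simp
    then show ?thesis using H_pos[OF y, of m] by (simp add: power_mult_distrib)
  qed
  show "(rfun H n has_real_derivative deriv (rfun H n) x) (at x)"
    using dr[OF x] DERIV_imp_deriv[OF dr[OF x]] by simp
  have d2: "((\<lambda>y. 2 * c0 + 2 * (G (n + 1) y - G n y)) has_real_derivative
      2 * (deriv (G (n+1)) x - deriv (G n) x)) (at x)"
    using dG[OF x, of n] dG[OF x, of "n+1"] by (auto intro!: derivative_eq_intros)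
  have val: "2 * (deriv (G (n+1)) x - deriv (G n) x) =
     c0 * (deriv (rfun H n) x - 2 * c0)
         + (exp (rfun H (n + 1) x) - 2 * exp (rfun H n x) + exp (rfun H (n - 1) x))"
    unfolding dreq[OF x, of n] ex[OF x, of "n+1"] ex[OF x, of n] ex[OF x, of "n-1"]
    using eqG[OF x, of n] eqG[OF x, of "n+1"]
    by (simp add: algebra_simps)
  show "(deriv (rfun H n) has_real_derivative
        (c0 * (deriv (rfun H n) x - 2 * c0)
         + (exp (rfun H (n + 1) x) - 2 * exp (rfun H n x) + exp (rfun H (n - 1) x)))) (at x)"
    unfolding val[symmetric]
    by (rule has_field_derivative_transform_within_open[OF d2 I_open x]) (simp add: dreq)
qed

end
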